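(* Let $K$ be a flag simplicial complex on $[m]$ that is a starshaped $(n-1)$-sphere, let $\Lambda=(\lambda_{ij})$ ($1\leqslant i\leqslant n$, $1\leqslant j\leqslant m$) be a characteristic matrix for $K$, and let $\mathcal J\subset\mathbb Z[x_1,\dots,x_m]$ be the ideal generated by the linear forms $\lambda_{i1}x_1+\cdots+\lambda_{im}x_m$, $1\leqslant i\leqslant n$. If $\mathcal J$ contains a nonzero linear form $a_ix_i+a_jx_j$ with $i\neq j$ and $a_i,a_j\in\mathbb Z$, then $K$ is a suspension.
   Context: A simplicial complex $K$ on $[m]$ is flag if every missing face (non-face all of whose proper subsets are faces) has two elements. A starshaped $(n-1)$-sphere is a triangulated sphere isomorphic to the underlying complex of a complete simplicial fan in $\mathbb R^n$. A characteristic matrix is an $n\times m$ integer matrix with columns $\boldsymbol\lambda_1,\dots,\boldsymbol\lambda_m$ such that for each face $\{i_1,\dots,i_k\}\in K$ the vectors $\boldsymbol\lambda_{i_1},\dots,\boldsymbol\lambda_{i_k}$ are part of a basis of $\mathbb Z^n$. $K$ is a suspension if $K=K_{\{a,b\}}*L$ with $\{a,b\}\notin K$ (join). (For the topological toric manifold $M(P_K,\Lambda)$ one has $H^*(M;\mathbb Z)=\mathbb Z[K]/\mathcal J$.) *)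

theory Defs
  imports "HOL-Analysis.Analysis" "HOL-Library.Poly_Mapping"
begin

definition simplicial_complex_on :: "nat \<Rightarrow> nat set set \<Rightarrow> bool" where
  "simplicial_complex_on m K \<longleftrightarrow>
     {} \<in> K \<and> (\<forall>\<sigma>\<in>K. \<sigma> \<subseteq> {1..m}) \<and> (\<forall>\<sigma>\<in>K. \<forall>\<tau>. \<tau> \<subseteq> \<sigma> \<longrightarrow> \<tau> \<in> K)"

definition missing_face :: "nat \<Rightarrow> nat set set \<Rightarrow> nat set \<Rightarrow> bool" where
  "missing_face m K \<sigma> \<longleftrightarrow> \<sigma> \<subseteq> {1..m} \<and> \<sigma> \<notin> K \<and> (\<forall>\<tau>. \<tau> \<subset> \<sigma> \<longrightarrow> \<tau> \<in> K)"

definition flag_complex :: "nat \<Rightarrow> nat set set \<Rightarrow> bool" where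
  "flag_complex m K \<longleftrightarrow> (\<forall>\<sigma>. missing_face m K \<sigma> \<longrightarrow> card \<sigma> = 2)"

definition face_cone :: "(nat \<Rightarrow> real ^ ('n::finite)) \<Rightarrow> nat set \<Rightarrow> (real ^ 'n) set" where
  "face_cone v \<sigma> = {(\<Sum>i\<in>\<sigma>. c i *\<^sub>R v i) | c. \<forall>i\<in>\<sigma>. c i \<ge> 0}"

text \<open>K is the underlying complex of a complete simplicial fan in R^n (n = CARD('n)),
  whose rays are spanned by v 1, ..., v m: every face spans a simplicial cone,
  the cones meet along common faces, and they cover R^n.\<close>
definition complete_simplicial_fan :: "nat \<Rightarrow> nat set set \<Rightarrow> (nat \<Rightarrow> real ^ ('n::finite)) \<Rightarrow> bool" where
  "complete_simplicial_fan m K v \<longleftrightarrow>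
     (\<forall>\<sigma>\<in>K. inj_on v \<sigma> \<and> independent (v ` \<sigma>)) \<and>
     (\<forall>\<sigma>\<in>K. \<forall>\<tau>\<in>K. face_cone v \<sigma> \<inter> face_cone v \<tau> = face_cone v (\<sigma> \<inter> \<tau>)) \<and>
     (\<Union>\<sigma>\<in>K. face_cone v \<sigma>) = UNIV"

definition starshaped_sphere :: "('n::finite) itself \<Rightarrow> nat \<Rightarrow> nat set set \<Rightarrow> bool" where
  "starshaped_sphere _ m K \<longleftrightarrow> simplicial_complex_on m K \<and> (\<forall>i\<in>{1..m}. {i} \<in> K) \<and>
     (\<exists>v :: nat \<Rightarrow> real ^ 'n. complete_simplicial_fan m K v)"

definition Z_basis :: "(('n::finite) \<Rightarrow> int ^ 'n) \<Rightarrow> bool" where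
  "Z_basis b \<longleftrightarrow> (\<forall>z :: int ^ 'n. \<exists>!c :: 'n \<Rightarrow> int. z = (\<Sum>k\<in>UNIV. c k *s b k))"

text \<open>Characteristic matrix: columns lam 1, ..., lam m in Z^n; for each face, its columns
  are part of a basis of Z^n.\<close>
definition characteristic_matrix :: "nat \<Rightarrow> nat set set \<Rightarrow> (nat \<Rightarrow> int ^ ('n::finite)) \<Rightarrow> bool" where
  "characteristic_matrix m K lam \<longleftrightarrow>
     (\<forall>\<sigma>\<in>K. \<exists>b :: 'n \<Rightarrow> int ^ 'n. \<exists>f :: nat \<Rightarrow> 'n.
        Z_basis b \<and> inj_on f \<sigma> \<and> (\<forall>i\<in>\<sigma>. b (f i) = lam i))"

type_synonym zpoly = "(nat \<Rightarrow>\<^sub>0 nat) \<Rightarrow>\<^sub>0 int"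

definition Var :: "nat \<Rightarrow> zpoly" where
  "Var i = Poly_Mapping.single (Poly_Mapping.single i 1) 1"

definition Const :: "int \<Rightarrow> zpoly" where
  "Const a = Poly_Mapping.single 0 a"

definition row_form :: "nat \<Rightarrow> (nat \<Rightarrow> int ^ ('n::finite)) \<Rightarrow> 'n \<Rightarrow> zpoly" where
  "row_form m lam i = (\<Sum>j\<in>{1..m}. Const (lam j $ i) * Var j)"

definition ideal_J :: "nat \<Rightarrow> (nat \<Rightarrow> int ^ ('n::finite)) \<Rightarrow> zpoly set" where
  "ideal_J m lam = {(\<Sum>i\<in>UNIV. g i * row_form m lam i) | g :: 'n \<Rightarrow> zpoly.
                     \<forall>i. \<forall>mon \<in> Poly_Mapping.keys (g i). Poly_Mapping.keys mon \<subseteq> {1..m}}"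

definition full_subcomplex :: "nat set set \<Rightarrow> nat set \<Rightarrow> nat set set" where
  "full_subcomplex K S = {\<sigma>\<in>K. \<sigma> \<subseteq> S}"

definition join :: "nat set set \<Rightarrow> nat set set \<Rightarrow> nat set set" where
  "join K1 K2 = {\<sigma> \<union> \<tau> | \<sigma> \<tau>. \<sigma> \<in> K1 \<and> \<tau> \<in> K2}"

definition is_suspension :: "nat \<Rightarrow> nat set set \<Rightarrow> bool" where
  "is_suspension m K \<longleftrightarrow> (\<exists>a b L. a \<in> {1..m} \<and> b \<in> {1..m} \<and> a \<noteq> b \<and> {a, b} \<notin> K \<and>
     simplicial_complex_on m L \<and> (\<forall>\<tau>\<in>L. \<tau> \<inter> {a, b} = {}) \<and>
     K = join (full_subcomplex K {a, b}) L)"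

end

theory Submission
  imports Defs
begin


lemma mon_eq: "(u::nat\<Rightarrow>\<^sub>0nat) + Poly_Mapping.single j 1 = Poly_Mapping.single l 1 \<longleftrightarrow> u = 0 \<and> j = l"
proof
  assume h: "u + Poly_Mapping.single j 1 = Poly_Mapping.single l 1"
  have "Poly_Mapping.lookup (u + Poly_Mapping.single j 1) j = Poly_Mapping.lookup (Poly_Mapping.single l 1) j" using h by simp
  hence "Poly_Mapping.lookup u j + 1 = (1 when l = j)" by (simp add: lookup_add lookup_single)
  hence jl: "j = l" and "Poly_Mapping.lookup u j = 0" by (auto simp: when_def split: if_splits)
  with h have "u + Poly_Mapping.single l 1 = 0 + Poly_Mapping.single l 1" by simp
  hence "u = 0" by (metis add_right_cancel)
  with jl show "u = 0 \<and> j = l" by simp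
qed auto

lemma mon_eq': "Poly_Mapping.single l 1 = (u::nat\<Rightarrow>\<^sub>0nat) + Poly_Mapping.single j 1 \<longleftrightarrow> u = 0 \<and> j = l"
  using mon_eq by metis

lemma lookup_mult_CV:
  "Poly_Mapping.lookup (g * (Const a * Var j)) (Poly_Mapping.single l 1) = (if j = l then Poly_Mapping.lookup g 0 * a else 0)"
proof -
  have "Const a * Var j = Poly_Mapping.single (Poly_Mapping.single j 1) a"
    by (simp add: Const_def Var_def mult_single)
  then have "Poly_Mapping.lookup (g * (Const a * Var j)) (Poly_Mapping.single l 1) =
     (\<Sum>u. Poly_Mapping.lookup g u * (a when Poly_Mapping.single l 1 = u + Poly_Mapping.single j 1))"
    unfolding \<open>Const a * Var j = _\<close> lookup_mult lookup_single
    by (intro Sum_any.cong arg_cong2[where f="(*)"] refl) (subst when_commute, simp)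
  also have "\<dots> = (\<Sum>u. (Poly_Mapping.lookup g u * a when j = l) when u = 0)"
    by (rule Sum_any.cong) (simp only: mon_eq' when_def, auto)
  also have "\<dots> = (if j = l then Poly_Mapping.lookup g 0 * a else 0)" by (simp add: when_def)
  finally show ?thesis .
qed

lemma lookup_CV: "Poly_Mapping.lookup (Const a * Var j) (Poly_Mapping.single l 1) = (if j = l then a else 0)"
  using lookup_mult_CV[of 1 a j l] by (simp add: lookup_one)

lemma extract_c:
  fixes lam :: "nat \<Rightarrow> int ^ 'n"
  assumes "p \<in> ideal_J m lam"
  shows "\<exists>c::'n \<Rightarrow> int. \<forall>l. Poly_Mapping.lookup p (Poly_Mapping.single l 1) = (\<Sum>k\<in>UNIV. c k * (if l \<in> {1..m} then lam l $ k else 0))"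
proof -
  obtain g where p: "p = (\<Sum>i\<in>UNIV. g i * row_form m lam i)" using assms by (auto simp: ideal_J_def)
  show ?thesis
  proof (intro exI allI)
    fix l
    show "Poly_Mapping.lookup p (Poly_Mapping.single l 1) = (\<Sum>k\<in>UNIV. Poly_Mapping.lookup (g k) 0 * (if l \<in> {1..m} then lam l $ k else 0))"
      unfolding p row_form_def lookup_sum sum_distrib_left lookup_mult_CV
      by (rule sum.cong) (auto simp: sum.delta' mult.commute)
  qed
qed



lemma face_coneI:
  "x = (\<Sum>i\<in>\<sigma>. c i *\<^sub>R v i) \<Longrightarrow> \<forall>i\<in>\<sigma>. c i \<ge> 0 \<Longrightarrow> x \<in> face_cone v \<sigma>"
  unfolding face_cone_def by blast

lemma indep_unique:
  fixes v :: "nat \<Rightarrow> real ^ 'n::finite"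
  assumes "finite \<sigma>" "inj_on v \<sigma>" "independent (v ` \<sigma>)"
    and "(\<Sum>k\<in>\<sigma>. a k *\<^sub>R v k) = 0" and "k \<in> \<sigma>"
  shows "a k = 0"
proof -
  define c where "c x = a (inv_into \<sigma> v x)" for x
  have "(\<Sum>x\<in>v ` \<sigma>. c x *\<^sub>R x) = (\<Sum>k\<in>\<sigma>. c (v k) *\<^sub>R v k)"
    by (rule sum.reindex[OF assms(2), unfolded comp_def])
  also have "\<dots> = (\<Sum>k\<in>\<sigma>. a k *\<^sub>R v k)"
    by (rule sum.cong) (auto simp: c_def assms(2))
  finally have "(\<Sum>x\<in>v ` \<sigma>. c x *\<^sub>R x) = 0" using assms(4) by simp
  hence "c (v k) = 0" using assms(3,5) unfolding independent_explicit by blast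
  thus ?thesis by (simp add: c_def assms(2,5))
qed

lemma convex_cone_sum:
  assumes "convex_cone S" "finite A" "\<And>k. k \<in> A \<Longrightarrow> f k \<in> S"
  shows "sum f A \<in> S"
  using assms(2,3)
proof (induction A rule: finite_induct)
  case empty then show ?case using assms(1) by (simp add: convex_cone_contains_0)
next
  case (insert x F) then show ?case using assms(1) by (simp add: convex_cone_iff)
qed

lemma face_cone_hull:
  fixes v :: "nat \<Rightarrow> real ^ 'n::finite"
  assumes "finite \<sigma>"
  shows "face_cone v \<sigma> = convex_cone hull (v ` \<sigma>)"
proof
  show "face_cone v \<sigma> \<subseteq> convex_cone hull (v ` \<sigma>)"
  proof
    fix x assume "x \<in> face_cone v \<sigma>"
    then obtain c where x: "x = (\<Sum>i\<in>\<sigma>. c i *\<^sub>R v i)" and c: "\<forall>i\<in>\<sigma>. c i \<ge> 0"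
      by (auto simp: face_cone_def)
    show "x \<in> convex_cone hull (v ` \<sigma>)" unfolding x
      by (rule convex_cone_sum[OF convex_cone_convex_cone_hull assms])
         (simp add: c convex_cone_hull_mul hull_inc)
  qed
  show "convex_cone hull (v ` \<sigma>) \<subseteq> face_cone v \<sigma>"
  proof (rule hull_minimal)
    show "v ` \<sigma> \<subseteq> face_cone v \<sigma>"
    proof
      fix x assume "x \<in> v ` \<sigma>"
      then obtain k where k: "k \<in> \<sigma>" "x = v k" by auto
      have "x = (\<Sum>i\<in>\<sigma>. (if i = k then 1 else 0) *\<^sub>R v i)"
        using k assms by (simp add: if_distrib[of "\<lambda>t. t *\<^sub>R _"] sum.delta cong: if_cong)
      thus "x \<in> face_cone v \<sigma>" by (rule face_coneI) simp
    qed
    show "convex_cone (face_cone v \<sigma>)"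
      unfolding convex_cone_iff
    proof (intro conjI ballI allI impI)
      show "0 \<in> face_cone v \<sigma>" by (rule face_coneI[where c="\<lambda>_. 0"]) simp_all
    next
      fix x y assume "x \<in> face_cone v \<sigma>" "y \<in> face_cone v \<sigma>"
      then obtain c d where "x = (\<Sum>i\<in>\<sigma>. c i *\<^sub>R v i)" "\<forall>i\<in>\<sigma>. c i \<ge> 0"
        "y = (\<Sum>i\<in>\<sigma>. d i *\<^sub>R v i)" "\<forall>i\<in>\<sigma>. d i \<ge> 0"
        by (auto simp: face_cone_def)
      hence h1: "x + y = (\<Sum>i\<in>\<sigma>. (c i + d i) *\<^sub>R v i)" and h2: "\<forall>i\<in>\<sigma>. c i + d i \<ge> 0"
        by (simp_all add: sum.distrib scaleR_add_left)
      show "x + y \<in> face_cone v \<sigma>" by (rule face_coneI[OF h1 h2])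
    next
      fix x and t :: real assume "x \<in> face_cone v \<sigma>" "t \<ge> 0"
      then obtain c where "x = (\<Sum>i\<in>\<sigma>. c i *\<^sub>R v i)" "\<forall>i\<in>\<sigma>. c i \<ge> 0"
        by (auto simp: face_cone_def)
      hence h1: "t *\<^sub>R x = (\<Sum>i\<in>\<sigma>. (t * c i) *\<^sub>R v i)" and h2: "\<forall>i\<in>\<sigma>. t * c i \<ge> 0"
        using \<open>t \<ge> 0\<close> by (simp_all add: scaleR_sum_right)
      show "t *\<^sub>R x \<in> face_cone v \<sigma>" by (rule face_coneI[OF h1 h2])
    qed
  qed
qed

lemma closed_face_cone:
  fixes v :: "nat \<Rightarrow> real ^ 'n::finite"
  shows "finite \<sigma> \<Longrightarrow> closed (face_cone v \<sigma>)"
  by (simp add: face_cone_hull closed_convex_cone_hull)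

lemma face_cone_mono:
  fixes v :: "nat \<Rightarrow> real ^ 'n::finite"
  assumes "finite F" "G \<subseteq> F"
  shows "face_cone v G \<subseteq> face_cone v F"
proof
  fix x assume "x \<in> face_cone v G"
  then obtain c where x: "x = (\<Sum>i\<in>G. c i *\<^sub>R v i)" and c: "\<forall>i\<in>G. c i \<ge> 0"
    by (auto simp: face_cone_def)
  have "x = (\<Sum>i\<in>F. (if i \<in> G then c i else 0) *\<^sub>R v i)"
    unfolding x using assms
    by (simp add: if_distrib[of "\<lambda>t. t *\<^sub>R _"] sum.inter_restrict[symmetric] Int_absorb1 cong: if_cong)
  moreover have "\<forall>i\<in>F. (if i \<in> G then c i else 0) \<ge> 0" using c by auto
  ultimately show "x \<in> face_cone v F" by (rule face_coneI)
qed

lemma face_cone_span: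
  fixes v :: "nat \<Rightarrow> real ^ 'n::finite"
  shows "face_cone v \<sigma> \<subseteq> span (v ` \<sigma>)"
proof
  fix x assume "x \<in> face_cone v \<sigma>"
  then obtain c where x: "x = (\<Sum>i\<in>\<sigma>. c i *\<^sub>R v i)" by (auto simp: face_cone_def)
  show "x \<in> span (v ` \<sigma>)" unfolding x
    by (intro span_sum span_mul span_base imageI)
qed



lemma dim_vec_UNIV: "dim (UNIV :: (real ^ 'n::finite) set) = CARD('n)"
  by simp

lemma limit_face:
  fixes v :: "nat \<Rightarrow> real ^ 'n::finite"
  assumes fan: "complete_simplicial_fan m K v" and sc: "simplicial_complex_on m K"
    and sK: "\<sigma> \<in> K" and sS: "\<sigma> \<subseteq> S"
    and approx: "\<And>e. e > 0 \<Longrightarrow> \<exists>q G. G \<in> K \<and> \<not> G \<subseteq> S \<and> q \<in> face_cone v G \<and> dist q (\<Sum>k\<in>\<sigma>. v k) < e"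
  shows "\<exists>G\<in>K. \<sigma> \<subseteq> G \<and> \<not> G \<subseteq> S"
proof -
  define p where "p = (\<Sum>k\<in>\<sigma>. v k)"
  define A where "A = (\<Union>G\<in>{G\<in>K. \<not> G \<subseteq> S}. face_cone v G)"
  have Ksub: "\<And>G. G \<in> K \<Longrightarrow> G \<subseteq> {1..m}" using sc by (auto simp: simplicial_complex_on_def)
  hence finG: "\<And>G. G \<in> K \<Longrightarrow> finite G" using finite_subset by blast
  have "K \<subseteq> Pow {1..m}" using Ksub by auto
  hence finK: "finite K" using finite_subset by blast
  have "closed A" unfolding A_def
    by (rule closed_UN) (use finK finG closed_face_cone in auto)
  moreover have "p \<in> closure A"
    unfolding closure_approachable
  proof (intro allI impI)
    fix e :: real assume "e > 0"
    then obtain q G where "G \<in> K" "\<not> G \<subseteq> S" "q \<in> face_cone v G" "dist q p < e"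
      using approx p_def by blast
    thus "\<exists>y\<in>A. dist y p < e" unfolding A_def by blast
  qed
  ultimately have "p \<in> A" by (simp add: closure_closed)
  then obtain G where G: "G \<in> K" "\<not> G \<subseteq> S" "p \<in> face_cone v G" unfolding A_def by blast
  have "p \<in> face_cone v \<sigma>" by (rule face_coneI[where c="\<lambda>_. 1"]) (simp_all add: p_def)
  with G fan sK have "p \<in> face_cone v (\<sigma> \<inter> G)" by (auto simp: complete_simplicial_fan_def)
  then obtain c where pc: "p = (\<Sum>k\<in>\<sigma> \<inter> G. c k *\<^sub>R v k)" by (auto simp: face_cone_def)
  have finS: "finite \<sigma>" using finG sK .
  have "(\<Sum>k\<in>\<sigma>. (1 - (if k \<in> G then c k else 0)) *\<^sub>R v k) =
        (\<Sum>k\<in>\<sigma>. v k) - (\<Sum>k\<in>\<sigma>. (if k \<in> G then c k *\<^sub>R v k else 0))"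
    by (simp add: scaleR_diff_left sum_subtractf if_distrib[of "\<lambda>t. t *\<^sub>R _"] cong: if_cong)
  also have "\<dots> = 0" using pc p_def finS by (simp add: sum.inter_restrict)
  finally have eq0: "(\<Sum>k\<in>\<sigma>. (1 - (if k \<in> G then c k else 0)) *\<^sub>R v k) = 0" .
  have "\<sigma> \<subseteq> G"
  proof
    fix k assume "k \<in> \<sigma>"
    have "1 - (if k \<in> G then c k else 0) = 0"
      using indep_unique[OF finS _ _ eq0 \<open>k \<in> \<sigma>\<close>] fan sK by (auto simp: complete_simplicial_fan_def)
    thus "k \<in> G" by (auto split: if_splits)
  qed
  thus ?thesis using G by blast
qed

lemma small_step:
  fixes x e :: real assumes "e > 0" and that: "x \<ge> 0"
  shows "e / (2 * (x + 1)) > 0 \<and> (e / (2 * (x + 1))) * x < e"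
proof -
  have "x + 1 > 0" using that by simp
  have "(e / (2 * (x + 1))) * x \<le> (e / (2 * (x + 1))) * (x + 1)"
    using assms that by (intro mult_left_mono) auto
  also have "\<dots> = e / 2" using \<open>x + 1 > 0\<close> by (simp add: field_simps)
  finally have h: "(e / (2 * (x + 1))) * x \<le> e / 2" .
  have "e / 2 < e" using assms by simp
  with h have "(e / (2 * (x + 1))) * x < e" by linarith
  moreover have "e / (2 * (x + 1)) > 0" using assms \<open>x + 1 > 0\<close> by simp
  ultimately show ?thesis by simp
qed

lemma face_extend:
  fixes v :: "nat \<Rightarrow> real ^ 'n::finite"
  assumes fan: "complete_simplicial_fan m K v" and sc: "simplicial_complex_on m K"
    and sK: "\<sigma> \<in> K" and small: "card \<sigma> < CARD('n)"
  shows "\<exists>y. y \<notin> \<sigma> \<and> insert y \<sigma> \<in> K"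
proof -
  have Ksub: "\<And>G. G \<in> K \<Longrightarrow> G \<subseteq> {1..m}" using sc by (auto simp: simplicial_complex_on_def)
  hence finG: "\<And>G. G \<in> K \<Longrightarrow> finite G" using finite_subset by blast
  have down: "\<And>G H. G \<in> K \<Longrightarrow> H \<subseteq> G \<Longrightarrow> H \<in> K" using sc by (auto simp: simplicial_complex_on_def)
  have finS: "finite \<sigma>" using finG sK .
  have "span (v ` \<sigma>) \<noteq> UNIV"
  proof
    assume "span (v ` \<sigma>) = UNIV"
    hence "dim (UNIV :: (real ^ 'n) set) = dim (v ` \<sigma>)" by (metis dim_span)
    also have "\<dots> \<le> card (v ` \<sigma>)" using finS by (intro dim_le_card) (auto intro: span_base)
    also have "\<dots> \<le> card \<sigma>" using finS by (rule card_image_le)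
    finally show False using small by simp
  qed
  then obtain w where w: "w \<notin> span (v ` \<sigma>)" by blast
  define p where "p = (\<Sum>k\<in>\<sigma>. v k)"
  have pspan: "p \<in> span (v ` \<sigma>)" unfolding p_def by (intro span_sum span_base imageI)
  have "\<exists>G\<in>K. \<sigma> \<subseteq> G \<and> \<not> G \<subseteq> \<sigma>"
  proof (rule limit_face[OF fan sc sK order_refl])
    fix e :: real assume "e > 0"
    define t where "t = e / (2 * (norm w + 1))"
    have t: "t > 0" "t * norm w < e" using small_step[OF \<open>e > 0\<close>, of "norm w"] by (auto simp: t_def)
    define q where "q = p + t *\<^sub>R w"
    have "q \<in> (\<Union>G\<in>K. face_cone v G)" using fan by (simp add: complete_simplicial_fan_def)
    then obtain G where G: "G \<in> K" "q \<in> face_cone v G" by blast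
    have "\<not> G \<subseteq> \<sigma>"
    proof
      assume "G \<subseteq> \<sigma>"
      hence "q \<in> span (v ` \<sigma>)" using G face_cone_mono[OF finS] face_cone_span by blast
      hence "q - p \<in> span (v ` \<sigma>)" using pspan by (rule span_diff)
      hence "(1 / t) *\<^sub>R (q - p) \<in> span (v ` \<sigma>)" by (rule span_mul)
      thus False using w t by (simp add: q_def)
    qed
    moreover have "dist q p < e" using t by (simp add: q_def dist_norm)
    ultimately show "\<exists>q G. G \<in> K \<and> \<not> G \<subseteq> \<sigma> \<and> q \<in> face_cone v G \<and> dist q (\<Sum>k\<in>\<sigma>. v k) < e"
      using G p_def by blast
  qed
  then obtain G y where "G \<in> K" "\<sigma> \<subseteq> G" "y \<in> G" "y \<notin> \<sigma>" by blast
  thus ?thesis using down by (metis insert_subset)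
qed

lemma face_flip:
  fixes v :: "nat \<Rightarrow> real ^ 'n::finite"
  assumes fan: "complete_simplicial_fan m K v" and sc: "simplicial_complex_on m K"
    and FK: "F \<in> K" and xF: "x \<in> F"
  shows "\<exists>y. y \<notin> F \<and> insert y (F - {x}) \<in> K"
proof -
  have Ksub: "\<And>G. G \<in> K \<Longrightarrow> G \<subseteq> {1..m}" using sc by (auto simp: simplicial_complex_on_def)
  hence finG: "\<And>G. G \<in> K \<Longrightarrow> finite G" using finite_subset by blast
  have down: "\<And>G H. G \<in> K \<Longrightarrow> H \<subseteq> G \<Longrightarrow> H \<in> K" using sc by (auto simp: simplicial_complex_on_def)
  have finF: "finite F" using finG FK .
  have sK: "F - {x} \<in> K" using down FK by blast
  have "\<exists>G\<in>K. F - {x} \<subseteq> G \<and> \<not> G \<subseteq> F"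
  proof (rule limit_face[OF fan sc sK Diff_subset])
    fix e :: real assume "e > 0"
    define t where "t = e / (2 * (norm (v x) + 1))"
    have t: "t > 0" "t * norm (v x) < e" using small_step[OF \<open>e > 0\<close>, of "norm (v x)"] by (auto simp: t_def)
    define p where "p = (\<Sum>k\<in>F - {x}. v k)"
    define q where "q = p - t *\<^sub>R v x"
    have "q \<in> (\<Union>G\<in>K. face_cone v G)" using fan by (simp add: complete_simplicial_fan_def)
    then obtain G where G: "G \<in> K" "q \<in> face_cone v G" by blast
    have "\<not> G \<subseteq> F"
    proof
      assume "G \<subseteq> F"
      hence "q \<in> face_cone v F" using G face_cone_mono[OF finF] by blast
      then obtain c where qc: "q = (\<Sum>k\<in>F. c k *\<^sub>R v k)" and c: "\<forall>k\<in>F. c k \<ge> 0"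
        by (auto simp: face_cone_def)
      have q2: "q = (\<Sum>k\<in>F. (if k = x then - t else 1) *\<^sub>R v k)"
        unfolding q_def p_def using finF xF
        by (simp add: sum.remove[of F x] if_distrib[of "\<lambda>t. t *\<^sub>R _"] cong: if_cong)
      have "(\<Sum>k\<in>F. ((if k = x then - t else 1) - c k) *\<^sub>R v k) = 0"
        using qc q2 by (simp add: scaleR_diff_left sum_subtractf)
      hence "(if x = x then - t else 1) - c x = 0"
        using indep_unique[OF finF _ _ _ xF, where a="\<lambda>k. (if k = x then - t else 1) - c k" and v=v] fan FK by (auto simp: complete_simplicial_fan_def)
      thus False using c xF t by auto
    qed
    moreover have "dist q p < e" using t by (simp add: q_def dist_norm)
    ultimately show "\<exists>q G. G \<in> K \<and> \<not> G \<subseteq> F \<and> q \<in> face_cone v G \<and> dist q (\<Sum>k\<in>F - {x}. v k) < e"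
      using G p_def by blast
  qed
  then obtain G y where "G \<in> K" "F - {x} \<subseteq> G" "y \<in> G" "y \<notin> F" by blast
  thus ?thesis using down by (metis insert_subset)
qed



lemma card_le_N:
  fixes lam :: "nat \<Rightarrow> int ^ 'n::finite"
  assumes "characteristic_matrix m K lam" "\<sigma> \<in> K" "finite \<sigma>"
  shows "card \<sigma> \<le> CARD('n)"
proof -
  obtain b and f :: "nat \<Rightarrow> 'n" where "inj_on f \<sigma>"
    using assms unfolding characteristic_matrix_def by blast
  hence "card \<sigma> = card (f ` \<sigma>)" by (simp add: card_image)
  also have "\<dots> \<le> CARD('n)" by (rule card_mono) auto
  finally show ?thesis .
qed

lemma full_basis_dot:
  fixes lam :: "nat \<Rightarrow> int ^ 'n::finite" and c :: "'n \<Rightarrow> int"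
  assumes "characteristic_matrix m K lam" "\<sigma> \<in> K" "finite \<sigma>" "card \<sigma> = CARD('n)"
    and zero: "\<forall>l\<in>\<sigma>. (\<Sum>k\<in>UNIV. c k * lam l $ k) = 0"
  shows "(\<Sum>k\<in>UNIV. c k * z $ k) = 0"
proof -
  obtain b and f :: "nat \<Rightarrow> 'n" where bf: "Z_basis b" "inj_on f \<sigma>" "\<forall>i\<in>\<sigma>. b (f i) = lam i"
    using assms unfolding characteristic_matrix_def by blast
  have "card (f ` \<sigma>) = CARD('n)" using bf assms by (simp add: card_image)
  hence fU: "f ` \<sigma> = UNIV" by (intro card_eq_UNIV_imp_eq_UNIV) auto
  have bz: "(\<Sum>k\<in>UNIV. c k * b r $ k) = 0" for r
  proof -
    obtain l where "l \<in> \<sigma>" "r = f l" using fU by (metis UNIV_I imageE)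
    thus ?thesis using bf zero by simp
  qed
  obtain d where z: "z = (\<Sum>r\<in>UNIV. d r *s b r)" using bf unfolding Z_basis_def by blast
  have "(\<Sum>k\<in>UNIV. c k * z $ k) = (\<Sum>k\<in>UNIV. \<Sum>r\<in>UNIV. d r * (c k * b r $ k))"
    unfolding z by (simp add: sum_distrib_left mult.left_commute)
  also have "\<dots> = (\<Sum>r\<in>UNIV. d r * (\<Sum>k\<in>UNIV. c k * b r $ k))"
    by (subst sum.swap) (simp add: sum_distrib_left)
  also have "\<dots> = 0" using bz by simp
  finally show ?thesis .
qed

lemma min_nonface:
  assumes "finite U" "U \<notin> K"
  shows "\<exists>U'\<subseteq>U. U' \<notin> K \<and> (\<forall>W. W \<subset> U' \<longrightarrow> W \<in> K)"
  using assms
proof (induction U rule: finite_psubset_induct)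
  case (psubset A)
  show ?case
  proof (cases "\<forall>W. W \<subset> A \<longrightarrow> W \<in> K")
    case True thus ?thesis using psubset.prems by blast
  next
    case False
    then obtain W where "W \<subset> A" "W \<notin> K" by blast
    with psubset.IH obtain U' where "U' \<subseteq> W" "U' \<notin> K" "\<forall>W. W \<subset> U' \<longrightarrow> W \<in> K" by blast
    thus ?thesis using \<open>W \<subset> A\<close> by blast
  qed
qed

lemma flag_face:
  assumes "flag_complex m K" "finite T" "T \<subseteq> {1..m}"
    and pairs: "\<And>a b. a \<in> T \<Longrightarrow> b \<in> T \<Longrightarrow> a \<noteq> b \<Longrightarrow> {a, b} \<in> K"
  shows "T \<in> K"
proof (rule ccontr)
  assume "T \<notin> K"
  then obtain U where U: "U \<subseteq> T" "U \<notin> K" "\<forall>W. W \<subset> U \<longrightarrow> W \<in> K"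
    using min_nonface[OF assms(2)] by blast
  hence "missing_face m K U" using assms(3) unfolding missing_face_def by blast
  hence "card U = 2" using assms(1) unfolding flag_complex_def by blast
  then obtain a b where "U = {a, b}" "a \<noteq> b" by (auto simp: card_2_iff)
  thus False using U pairs by auto
qed

lemma flip_card:
  assumes "finite F" "x \<in> F" "y \<notin> F"
  shows "card (insert y (F - {x})) = card F"
proof -
  have "card (insert y (F - {x})) = Suc (card (F - {x}))" using assms by simp
  also have "card F > 0" using assms card_gt_0_iff by blast
  hence "Suc (card (F - {x})) = card F" using assms by (simp add: card_Diff_singleton)
  finally show ?thesis .
qed



theorem mainTheorem14:
  fixes m :: nat and K :: "nat set set" and lam :: "nat \<Rightarrow> int ^ 'n"
  assumes "flag_complex m K"
    and "starshaped_sphere TYPE('n) m K"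
    and "characteristic_matrix m K lam"
    and "\<exists>i j a\<^sub>i a\<^sub>j. i \<in> {1..m} \<and> j \<in> {1..m} \<and> i \<noteq> j \<and>
           Const a\<^sub>i * Var i + Const a\<^sub>j * Var j \<noteq> 0 \<and>
           Const a\<^sub>i * Var i + Const a\<^sub>j * Var j \<in> ideal_J m lam"
  shows "is_suspension m K"
proof -
  note flag = assms(1) and cm = assms(3)
  obtain i j ai aj where ij: "i \<in> {1..m}" "j \<in> {1..m}" "i \<noteq> j"
    and nz: "Const ai * Var i + Const aj * Var j \<noteq> 0"
    and inJ: "Const ai * Var i + Const aj * Var j \<in> ideal_J m lam"
    using assms(4) by blast
  have sc: "simplicial_complex_on m K" and vert: "\<And>l. l \<in> {1..m} \<Longrightarrow> {l} \<in> K"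
    using assms(2) by (auto simp: starshaped_sphere_def)
  obtain v :: "nat \<Rightarrow> real ^ 'n" where fan: "complete_simplicial_fan m K v"
    using assms(2) by (auto simp: starshaped_sphere_def)
  have Ksub: "\<And>G. G \<in> K \<Longrightarrow> G \<subseteq> {1..m}" using sc by (auto simp: simplicial_complex_on_def)
  hence finG: "\<And>G. G \<in> K \<Longrightarrow> finite G" using finite_subset by blast
  have down: "\<And>G H. G \<in> K \<Longrightarrow> H \<subseteq> G \<Longrightarrow> H \<in> K" using sc by (auto simp: simplicial_complex_on_def)
  have empK: "{} \<in> K" using sc by (auto simp: simplicial_complex_on_def)
  define N where "N = CARD('n)"
  have cardle: "\<And>G. G \<in> K \<Longrightarrow> card G \<le> N" unfolding N_def using card_le_N[OF cm] finG by blast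
  obtain c :: "'n \<Rightarrow> int" where c: "\<forall>l. Poly_Mapping.lookup (Const ai * Var i + Const aj * Var j) (Poly_Mapping.single l 1)
     = (\<Sum>k\<in>UNIV. c k * (if l \<in> {1..m} then lam l $ k else 0))"
    using extract_c[OF inJ] by blast
  have dot: "(\<Sum>k\<in>UNIV. c k * lam l $ k) = (if i = l then ai else 0) + (if j = l then aj else 0)"
    if "l \<in> {1..m}" for l
    using c[rule_format, of l, unfolded lookup_add lookup_CV] that by simp
  have P3: "card G < N" if "G \<in> K" "G \<inter> {i, j} = {}" for G
  proof (rule ccontr)
    assume "\<not> card G < N"
    hence "card G = N" using cardle that by force
    moreover have "\<forall>l\<in>G. (\<Sum>k\<in>UNIV. c k * lam l $ k) = 0"
    proof
      fix l assume "l \<in> G"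
      hence "l \<in> {1..m}" "l \<noteq> i" "l \<noteq> j" using that Ksub[OF that(1)] by auto
      thus "(\<Sum>k\<in>UNIV. c k * lam l $ k) = 0" using dot[of l] by auto
    qed
    ultimately have z: "\<And>z. (\<Sum>k\<in>UNIV. c k * z $ k) = 0"
      using full_basis_dot[OF cm that(1) finG[OF that(1)]] N_def by blast
    have "ai = 0" using z[of "lam i"] dot[OF ij(1)] ij by simp
    moreover have "aj = 0" using z[of "lam j"] dot[OF ij(2)] ij by simp
    ultimately show False using nz by (simp add: Const_def)
  qed
  have pure: "\<exists>F\<in>K. \<sigma> \<subseteq> F \<and> card F = N" if "\<sigma> \<in> K" for \<sigma>
    using that
  proof (induction "N - card \<sigma>" arbitrary: \<sigma> rule: less_induct)
    case less
    show ?case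
    proof (cases "card \<sigma> = N")
      case True thus ?thesis using less.prems by blast
    next
      case False
      hence "card \<sigma> < N" using cardle less.prems by force
      then obtain y where y: "y \<notin> \<sigma>" "insert y \<sigma> \<in> K"
        using face_extend[OF fan sc less.prems] N_def by blast
      have "card (insert y \<sigma>) = Suc (card \<sigma>)" using y finG less.prems by simp
      hence "N - card (insert y \<sigma>) < N - card \<sigma>" using \<open>card \<sigma> < N\<close> by simp
      then obtain F where "F \<in> K" "insert y \<sigma> \<subseteq> F" "card F = N" using less.hyps y by blast
      thus ?thesis by blast
    qed
  qed
  have ij_nf: "{i, j} \<notin> K"
  proof
    assume ijK: "{i, j} \<in> K"
    obtain F where F: "F \<in> K" "{i, j} \<subseteq> F" "card F = N" using pure[OF ijK] by blast
    obtain y1 where y1: "y1 \<notin> F" "insert y1 (F - {i}) \<in> K"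
      using face_flip[OF fan sc F(1), of i] F by blast
    define G where "G = insert y1 (F - {i})"
    have GK: "G \<in> K" and jG: "j \<in> G" using y1 F ij by (auto simp: G_def)
    obtain y2 where y2: "y2 \<notin> G" "insert y2 (G - {j}) \<in> K"
      using face_flip[OF fan sc GK jG] by blast
    define H where "H = insert y2 (G - {j})"
    have HK: "H \<in> K" using y2 H_def by simp
    have finF: "finite F" using finG F(1) .
    show False
    proof (cases "y2 = i")
      case True
      have y1j: "y1 \<noteq> j" using y1 F by auto
      have y1z: "{y1, z} \<in> K" if "z \<in> F" for z
      proof (cases "z = i")
        case True
        have "{y1, z} \<subseteq> H" using \<open>y2 = i\<close> True y1j by (auto simp: H_def G_def)
        thus ?thesis using down HK by blast
      next
        case False
        have "{y1, z} \<subseteq> G" using that False by (auto simp: G_def)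
        thus ?thesis using down GK by blast
      qed
      have "insert y1 F \<in> K"
      proof (rule flag_face[OF flag])
        show "finite (insert y1 F)" using finF by simp
        show "insert y1 F \<subseteq> {1..m}" using Ksub[OF GK] Ksub[OF F(1)] by (auto simp: G_def)
        fix a b assume "a \<in> insert y1 F" "b \<in> insert y1 F" "a \<noteq> b"
        thus "{a, b} \<in> K"
        proof (elim insertE)
          assume "a = y1" "b = y1" thus ?thesis using \<open>a \<noteq> b\<close> by simp
        next
          assume "a = y1" "b \<in> F" thus ?thesis using y1z by simp
        next
          assume "a \<in> F" "b = y1" thus ?thesis using y1z[of a] by (simp add: insert_commute)
        next
          assume "a \<in> F" "b \<in> F"
          hence "{a, b} \<subseteq> F" by simp
          thus ?thesis using down F(1) by blast
        qed
      qed
      moreover have "card (insert y1 F) = Suc N" using finF y1 F by simp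
      ultimately show False using cardle by fastforce
    next
      case False
      have iF: "i \<in> F" using F by auto
      have "y2 \<noteq> j" using y2 jG by auto
      moreover have "i \<notin> G" using y1 iF by (auto simp: G_def)
      ultimately have "H \<inter> {i, j} = {}" using False by (auto simp: H_def)
      moreover have "card H = N"
      proof -
        have "card G = card F" unfolding G_def by (rule flip_card[OF finF iF y1(1)])
        moreover have "card H = card G" unfolding H_def by (rule flip_card[OF finG[OF GK] jG y2(1)])
        ultimately show ?thesis using F by simp
      qed
      ultimately show False using P3[OF HK] by simp
    qed
  qed
  have sym: "insert b \<tau> \<in> K" if ab: "{a, b} = {i, j}" "a \<noteq> b" and tt: "\<tau> \<inter> {i, j} = {}" "insert a \<tau> \<in> K"
    for a b \<tau>
  proof -
    obtain F where F: "F \<in> K" "insert a \<tau> \<subseteq> F" "card F = N" using pure[OF tt(2)] by blast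
    have aF: "a \<in> F" using F by auto
    have bF: "b \<notin> F"
    proof
      assume "b \<in> F"
      hence "{a, b} \<subseteq> F" using aF by simp
      thus False using down F(1) ij_nf ab by metis
    qed
    obtain y where y: "y \<notin> F" "insert y (F - {a}) \<in> K" using face_flip[OF fan sc F(1) aF] by blast
    show ?thesis
    proof (cases "y = b")
      case True
      have "a \<notin> \<tau>" using tt ab by auto
      hence "insert b \<tau> \<subseteq> insert y (F - {a})" using True F by auto
      thus ?thesis using down y by blast
    next
      case False
      have "insert y (F - {a}) \<inter> {i, j} = {}" using False y aF bF ab by auto
      moreover have "card (insert y (F - {a})) = N" using flip_card[OF finG[OF F(1)] aF y(1)] F by simp
      ultimately show ?thesis using P3[OF y(2)] by simp
    qed
  qed
  have ins: "insert i \<tau> \<in> K \<and> insert j \<tau> \<in> K" if tK: "\<tau> \<in> K" "\<tau> \<inter> {i, j} = {}" for \<tau>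
  proof -
    obtain F where F: "F \<in> K" "\<tau> \<subseteq> F" "card F = N" using pure[OF tK(1)] by blast
    have "F \<inter> {i, j} \<noteq> {}" using P3[OF F(1)] F by auto
    hence "i \<in> F \<or> j \<in> F" by blast
    hence "insert i \<tau> \<subseteq> F \<or> insert j \<tau> \<subseteq> F" using F by blast
    hence "insert i \<tau> \<in> K \<or> insert j \<tau> \<in> K" using F(1) down by blast
    thus ?thesis using sym[of i j \<tau>] sym[of j i \<tau>] tK ij by (auto simp: insert_commute)
  qed
  define L where "L = {\<tau> \<in> K. \<tau> \<inter> {i, j} = {}}"
  have full: "full_subcomplex K {i, j} = {{}, {i}, {j}}"
  proof
    show "full_subcomplex K {i, j} \<subseteq> {{}, {i}, {j}}"
    proof
      fix \<sigma> assume "\<sigma> \<in> full_subcomplex K {i, j}"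
      hence "\<sigma> \<in> K" "\<sigma> \<subseteq> {i, j}" by (auto simp: full_subcomplex_def)
      show "\<sigma> \<in> {{}, {i}, {j}}"
      proof (cases "i \<in> \<sigma>"; cases "j \<in> \<sigma>")
        assume "i \<in> \<sigma>" "j \<in> \<sigma>"
        hence "\<sigma> = {i, j}" using \<open>\<sigma> \<subseteq> {i, j}\<close> by blast
        thus ?thesis using ij_nf \<open>\<sigma> \<in> K\<close> by simp
      next
        assume "i \<in> \<sigma>" "j \<notin> \<sigma>"
        hence "\<sigma> = {i}" using \<open>\<sigma> \<subseteq> {i, j}\<close> by blast
        thus ?thesis by simp
      next
        assume "i \<notin> \<sigma>" "j \<in> \<sigma>"
        hence "\<sigma> = {j}" using \<open>\<sigma> \<subseteq> {i, j}\<close> by blast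
        thus ?thesis by simp
      next
        assume "i \<notin> \<sigma>" "j \<notin> \<sigma>"
        hence "\<sigma> = {}" using \<open>\<sigma> \<subseteq> {i, j}\<close> by blast
        thus ?thesis by simp
      qed
    qed
    show "{{}, {i}, {j}} \<subseteq> full_subcomplex K {i, j}"
      using empK vert ij by (auto simp: full_subcomplex_def)
  qed
  have "K = join (full_subcomplex K {i, j}) L"
  proof
    show "K \<subseteq> join (full_subcomplex K {i, j}) L"
    proof
      fix \<sigma> assume "\<sigma> \<in> K"
      have "\<sigma> = (\<sigma> \<inter> {i, j}) \<union> (\<sigma> - {i, j})" by auto
      moreover have "\<sigma> \<inter> {i, j} \<in> full_subcomplex K {i, j}"
        using down \<open>\<sigma> \<in> K\<close> by (auto simp: full_subcomplex_def)
      moreover have "\<sigma> - {i, j} \<in> L" using down \<open>\<sigma> \<in> K\<close> by (auto simp: L_def)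
      ultimately show "\<sigma> \<in> join (full_subcomplex K {i, j}) L" unfolding join_def by blast
    qed
    show "join (full_subcomplex K {i, j}) L \<subseteq> K"
    proof
      fix x assume "x \<in> join (full_subcomplex K {i, j}) L"
      then obtain \<sigma> \<tau> where x: "x = \<sigma> \<union> \<tau>" "\<sigma> \<in> {{}, {i}, {j}}" "\<tau> \<in> K" "\<tau> \<inter> {i, j} = {}"
        unfolding full join_def L_def by blast
      from x(2) show "x \<in> K"
      proof (elim insertE)
        assume "\<sigma> = {}" thus ?thesis using x by simp
      next
        assume "\<sigma> = {i}" thus ?thesis using x ins[OF x(3,4)] by simp
      next
        assume "\<sigma> = {j}" thus ?thesis using x ins[OF x(3,4)] by simp
      qed simp
    qed
  qed
  moreover have "simplicial_complex_on m L"
    unfolding simplicial_complex_on_def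
  proof (intro conjI ballI allI impI)
    show "{} \<in> L" using empK by (simp add: L_def)
  next
    fix \<sigma> assume "\<sigma> \<in> L" thus "\<sigma> \<subseteq> {1..m}" using Ksub by (simp add: L_def)
  next
    fix \<sigma> \<tau> assume "\<sigma> \<in> L" "\<tau> \<subseteq> \<sigma>"
    thus "\<tau> \<in> L" using down unfolding L_def by blast
  qed
  moreover have "\<forall>\<tau>\<in>L. \<tau> \<inter> {i, j} = {}" by (auto simp: L_def)
  ultimately show ?thesis unfolding is_suspension_def using ij ij_nf by blast
qed


end
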